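(* Let $(R,B)$ be an EIC problem with problem graph $G=(V,E)$ and sender neighborhoods $N_1,\dots,N_n$, and let $\mathscr C=\{V(C): C \text{ is a maximal clique in } G|_{N_i}\text{ for some } i\}$. For every neighborhood partition $(\tilde N_1,\dots,\tilde N_n)$ there exists a cover $\mathcal C$ of $V$ by elements of $\mathscr C$ such that $$\sum_{C_j\in\mathcal C}\chi\big(\overline{G|_{C_j}}\big)=\sum_{i=1}^n\chi\big(\overline{G|_{\tilde N_i}}\big).$$
   Context: An EIC problem is a pair $(R,B)$ of matrices in $\mathbb{F}_2^{n\times m}$ with disjoint supports (node $u$ needs block $a$ iff $R_{ua}=1$, has it iff $B_{ua}=1$). $P=\{(u,a):R_{ua}=1\}$. The problem graph $G=(V,E)$ has vertices $V=\{v_{(u,a)}:(u,a)\in P\}$ and a directed edge from $v_{(u,a)}$ to $v_{(w,b)}$ iff $B_{ub}=1$ or $a=b$; $G|_S$ is the subgraph induced on $S$. Sender neighborhood of node $k$: $N_k=\{v_{(w,b)}\in V:B_{kb}=1\}$. A neighborhood partition is a tuple $(\tilde N_1,\dots,\tilde N_n)$ with $\tilde N_i\subseteq N_i$, pairwise disjoint, union $V$. For a directed graph $H$ (loops disregarded): $\overline H$ has edge $(x,y)$, $x\ne y$, iff $(x,y)\notin E(H)$; a clique is a vertex set in which every ordered pair of distinct vertices is an edge (maximal if not properly contained in another clique); an independent set contains no edge in either direction; $\chi(H)$ is the minimum number of independent sets partitioning the vertex set ($0$ if empty). A cover of $V$ by elements of $\mathscr C$ is a collection of members of $\mathscr C$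 whose union is $V$. *)

theory Defs
  imports Main "HOL-Library.Disjoint_Sets"
begin

text \<open>Directed graphs are represented as pairs (vertex set, edge relation).
  Loops are disregarded throughout (all notions only look at pairs of distinct vertices).\<close>

type_synonym 'a digraph = "'a set \<times> ('a \<times> 'a) set"

definition induced :: "'a digraph \<Rightarrow> 'a set \<Rightarrow> 'a digraph" where
  "induced H S = (S, {(x,y). (x,y) \<in> snd H \<and> x \<in> S \<and> y \<in> S})"

definition complement :: "'a digraph \<Rightarrow> 'a digraph" where
  "complement H = (fst H, {(x,y). x \<in> fst H \<and> y \<in> fst H \<and> x \<noteq> y \<and> (x,y) \<notin> snd H})"

definition is_clique :: "'a digraph \<Rightarrow> 'a set \<Rightarrow> bool" where
  "is_clique H C \<longleftrightarrow> C \<subseteq> fst H \<and> (\<forall>x\<in>C. \<forall>y\<in>C. x \<noteq> y \<longrightarrow> (x,y) \<in> snd H)"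

definition is_maximal_clique :: "'a digraph \<Rightarrow> 'a set \<Rightarrow> bool" where
  "is_maximal_clique H C \<longleftrightarrow> is_clique H C \<and> \<not> (\<exists>D. is_clique H D \<and> C \<subset> D)"

definition is_independent :: "'a digraph \<Rightarrow> 'a set \<Rightarrow> bool" where
  "is_independent H I \<longleftrightarrow> I \<subseteq> fst H \<and> (\<forall>x\<in>I. \<forall>y\<in>I. x \<noteq> y \<longrightarrow> (x,y) \<notin> snd H)"

text \<open>Chromatic number: least number of independent sets partitioning the vertex set
  (0 for the empty graph).\<close>
definition chi :: "'a digraph \<Rightarrow> nat" where
  "chi H = (LEAST k. \<exists>P. partition_on (fst H) P \<and> finite P \<and> card P = k \<and>
                          (\<forall>I\<in>P. is_independent H I))"

text \<open>EIC problem: n nodes (indexed 0..<n), m blocks (indexed 0..<m);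
  R u a: node u needs block a; B u a: node u has block a (entries of F_2 matrices as bool).\<close>

definition eic_problem :: "nat \<Rightarrow> nat \<Rightarrow> (nat \<Rightarrow> nat \<Rightarrow> bool) \<Rightarrow> (nat \<Rightarrow> nat \<Rightarrow> bool) \<Rightarrow> bool" where
  "eic_problem n m R B \<longleftrightarrow> (\<forall>u<n. \<forall>a<m. \<not> (R u a \<and> B u a))"

definition problem_vertices :: "nat \<Rightarrow> nat \<Rightarrow> (nat \<Rightarrow> nat \<Rightarrow> bool) \<Rightarrow> (nat \<times> nat) set" where
  "problem_vertices n m R = {(u,a). u < n \<and> a < m \<and> R u a}"

definition problem_graph :: "nat \<Rightarrow> nat \<Rightarrow> (nat \<Rightarrow> nat \<Rightarrow> bool) \<Rightarrow> (nat \<Rightarrow> nat \<Rightarrow> bool) \<Rightarrow> (nat \<times> nat) digraph" where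
  "problem_graph n m R B =
     (problem_vertices n m R,
      {((u,a),(w,b)). (u,a) \<in> problem_vertices n m R \<and> (w,b) \<in> problem_vertices n m R \<and>
                      (B u b \<or> a = b)})"

definition sender_nbhd :: "nat \<Rightarrow> nat \<Rightarrow> (nat \<Rightarrow> nat \<Rightarrow> bool) \<Rightarrow> (nat \<Rightarrow> nat \<Rightarrow> bool) \<Rightarrow> nat \<Rightarrow> (nat \<times> nat) set" where
  "sender_nbhd n m R B k = {(w,b) \<in> problem_vertices n m R. B k b}"

definition nbhd_partition :: "nat \<Rightarrow> nat \<Rightarrow> (nat \<Rightarrow> nat \<Rightarrow> bool) \<Rightarrow> (nat \<Rightarrow> nat \<Rightarrow> bool) \<Rightarrow> (nat \<Rightarrow> (nat \<times> nat) set) \<Rightarrow> bool" where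
  "nbhd_partition n m R B Nt \<longleftrightarrow>
     (\<forall>i<n. Nt i \<subseteq> sender_nbhd n m R B i) \<and>
     (\<forall>i<n. \<forall>j<n. i \<noteq> j \<longrightarrow> Nt i \<inter> Nt j = {}) \<and>
     (\<Union>i<n. Nt i) = problem_vertices n m R"

definition max_clique_family :: "nat \<Rightarrow> nat \<Rightarrow> (nat \<Rightarrow> nat \<Rightarrow> bool) \<Rightarrow> (nat \<Rightarrow> nat \<Rightarrow> bool) \<Rightarrow> (nat \<times> nat) set set" where
  "max_clique_family n m R B =
     {C. \<exists>i<n. is_maximal_clique (induced (problem_graph n m R B) (sender_nbhd n m R B i)) C}"

end

theory Submission
  imports Defs
begin

lemma my_sum_list_concat: "sum_list (concat xss) = sum_list (map sum_list (xss :: nat list list))"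
  by (induct xss) auto

lemma chi_witness:
  assumes "finite S"
  shows "\<exists>P. partition_on S P \<and> finite P \<and> card P = chi (complement (induced H S)) \<and>
           (\<forall>I\<in>P. is_independent (complement (induced H S)) I)"
proof -
  have fst: "fst (complement (induced H S)) = S"
    by (simp add: complement_def induced_def)
  have ex: "\<exists>k P. partition_on S P \<and> finite P \<and> card P = k \<and>
           (\<forall>I\<in>P. is_independent (complement (induced H S)) I)"
    apply (rule exI[of _ "card ((\<lambda>x. {x}) ` S)"])
    apply (rule exI[of _ "(\<lambda>x. {x}) ` S"])
    using assms by (auto simp: partition_on_singletons is_independent_def fst)
  show ?thesis
    unfolding chi_def fst
    by (rule LeastI_ex[OF ex])
qed

lemma chi_clique:
  assumes "C \<noteq> {}" "\<forall>x\<in>C. \<forall>y\<in>C. x \<noteq> y \<longrightarrow> (x,y) \<in> snd H"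
  shows "chi (complement (induced H C)) = 1"
proof -
  have fst: "fst (complement (induced H C)) = C"
    by (simp add: complement_def induced_def)
  have ind: "is_independent (complement (induced H C)) C"
    using assms(2) by (auto simp: is_independent_def complement_def induced_def)
  show ?thesis
    unfolding chi_def fst
  proof (rule Least_equality)
    show "\<exists>P. partition_on C P \<and> finite P \<and> card P = 1 \<and> (\<forall>I\<in>P. is_independent (complement (induced H C)) I)"
      using ind assms(1) by (intro exI[of _ "{C}"]) (auto simp: partition_on_space)
  next
    fix y assume "\<exists>P. partition_on C P \<and> finite P \<and> card P = y \<and> (\<forall>I\<in>P. is_independent (complement (induced H C)) I)"
    then obtain P where "partition_on C P" "finite P" "card P = y" by blast
    then have "P \<noteq> {}" using assms(1) partition_on_empty by (metis partition_onD1 Union_empty)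
    then show "1 \<le> y" using \<open>finite P\<close> \<open>card P = y\<close>
      by (metis card_0_eq less_one linorder_not_le)
  qed
qed

lemma max_clique_ext:
  assumes "finite (fst H)" "is_clique H Q"
  shows "\<exists>C. is_maximal_clique H C \<and> Q \<subseteq> C"
  using assms(2)
proof (induction "card (fst H - Q)" arbitrary: Q rule: less_induct)
  case less
  show ?case
  proof (cases "is_maximal_clique H Q")
    case True then show ?thesis by blast
  next
    case False
    then obtain D where D: "is_clique H D" "Q \<subset> D"
      using less.prems by (auto simp: is_maximal_clique_def)
    have "D \<subseteq> fst H" using D(1) by (simp add: is_clique_def)
    then have "card (fst H - D) < card (fst H - Q)"
      using D(2) assms(1) by (intro psubset_card_mono) auto
    from less.hyps[OF this D(1)] D(2) show ?thesis by blast
  qed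
qed

lemma finite_pv: "finite (problem_vertices n m R)"
proof -
  have "problem_vertices n m R \<subseteq> {..<n} \<times> {..<m}"
    by (auto simp: problem_vertices_def)
  then show ?thesis by (rule finite_subset) auto
qed

lemma per_i:
  assumes "S \<subseteq> sender_nbhd n m R B i" "i < n"
  shows "\<exists>L. set L \<subseteq> max_clique_family n m R B \<and> S \<subseteq> \<Union>(set L) \<and>
             \<Union>(set L) \<subseteq> problem_vertices n m R \<and>
             (\<Sum>C\<leftarrow>L. chi (complement (induced (problem_graph n m R B) C))) =
             chi (complement (induced (problem_graph n m R B) S))"
proof -
  let ?G = "problem_graph n m R B"
  let ?N = "sender_nbhd n m R B i"
  let ?H = "induced ?G ?N"
  have Nsub: "?N \<subseteq> problem_vertices n m R" by (auto simp: sender_nbhd_def)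
  have finN: "finite ?N" using finite_subset[OF Nsub finite_pv] .
  have finS: "finite S" using finite_subset[OF assms(1) finN] .
  obtain P where P: "partition_on S P" "finite P" "card P = chi (complement (induced ?G S))"
    "\<forall>I\<in>P. is_independent (complement (induced ?G S)) I"
    using chi_witness[OF finS] by blast
  have cl: "is_clique ?H I" if "I \<in> P" for I
  proof -
    have IS: "I \<subseteq> S" using P(1) that by (auto simp: partition_on_def)
    have "\<forall>x\<in>I. \<forall>y\<in>I. x \<noteq> y \<longrightarrow> (x,y) \<in> snd ?G"
    proof (intro ballI impI)
      fix x y assume "x \<in> I" "y \<in> I" "x \<noteq> y"
      have "x \<in> S" "y \<in> S" using IS \<open>x \<in> I\<close> \<open>y \<in> I\<close> by auto
      have "is_independent (complement (induced ?G S)) I" using P(4) that by blast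
      then have "(x,y) \<notin> snd (complement (induced ?G S))"
        unfolding is_independent_def using \<open>x \<in> I\<close> \<open>y \<in> I\<close> \<open>x \<noteq> y\<close> by blast
      then show "(x,y) \<in> snd ?G"
        using \<open>x \<in> S\<close> \<open>y \<in> S\<close> \<open>x \<noteq> y\<close>
        unfolding complement_def induced_def by simp
    qed
    then show ?thesis using IS assms(1)
      by (auto simp: is_clique_def induced_def)
  qed
  have "\<forall>I\<in>P. \<exists>C. is_maximal_clique ?H C \<and> I \<subseteq> C"
    using cl max_clique_ext[of ?H] finN by (simp add: induced_def)
  then obtain f where f: "\<And>I. I \<in> P \<Longrightarrow> is_maximal_clique ?H (f I) \<and> I \<subseteq> f I"
    by metis
  obtain xs where xs: "set xs = P" "distinct xs" using finite_distinct_list[OF P(2)] by blast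
  define L where "L = map f xs"
  have fam: "set L \<subseteq> max_clique_family n m R B"
    using f assms(2) by (auto simp: L_def xs max_clique_family_def)
  have cov: "S \<subseteq> \<Union>(set L)"
  proof
    fix x assume "x \<in> S"
    then obtain I where "I \<in> P" "x \<in> I" using P(1) by (auto simp: partition_on_def)
    then show "x \<in> \<Union>(set L)" using f[of I] by (auto simp: L_def xs)
  qed
  have sub: "\<Union>(set L) \<subseteq> problem_vertices n m R"
    using f Nsub by (fastforce simp: L_def xs is_maximal_clique_def is_clique_def induced_def)
  have one: "chi (complement (induced ?G C)) = 1" if "C \<in> set L" for C
  proof -
    have "C \<in> f ` P" using that xs(1) by (simp add: L_def)
    then obtain I where I: "I \<in> P" "C = f I" by blast
    have "I \<noteq> {}" using P(1) I(1) by (auto simp: partition_on_def)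
    then have ne: "C \<noteq> {}" using f[OF I(1)] I(2) by auto
    have "\<forall>x\<in>C. \<forall>y\<in>C. x \<noteq> y \<longrightarrow> (x,y) \<in> snd ?G"
      using f[OF I(1)] I(2) by (auto simp: is_maximal_clique_def is_clique_def induced_def)
    then show ?thesis using chi_clique[OF ne] by blast
  qed
  have "(\<Sum>C\<leftarrow>L. chi (complement (induced ?G C))) = (\<Sum>C\<leftarrow>L. 1)"
    using one by (metis (mono_tags, lifting) map_eq_conv)
  also have "\<dots> = length L" by (simp add: sum_list_triv)
  also have "\<dots> = card P"
  proof -
    have "card P = length xs" using distinct_card[OF xs(2)] unfolding xs(1) .
    then show ?thesis unfolding L_def length_map by (rule sym)
  qed
  finally have eq: "(\<Sum>C\<leftarrow>L. chi (complement (induced ?G C))) = chi (complement (induced ?G S))"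
    using P(3) by simp
  show ?thesis
    by (intro exI[of _ L] conjI fam cov sub eq)
qed

theorem lemma6:
  fixes n m :: nat and R B :: "nat \<Rightarrow> nat \<Rightarrow> bool" and Nt :: "nat \<Rightarrow> (nat \<times> nat) set"
  assumes "eic_problem n m R B"
    and "nbhd_partition n m R B Nt"
  shows "\<exists>Cs :: (nat \<times> nat) set list.
           set Cs \<subseteq> max_clique_family n m R B \<and>
           \<Union> (set Cs) = problem_vertices n m R \<and>
           (\<Sum>C\<leftarrow>Cs. chi (complement (induced (problem_graph n m R B) C))) =
           (\<Sum>i<n. chi (complement (induced (problem_graph n m R B) (Nt i))))"
proof -
  let ?c = "\<lambda>C. chi (complement (induced (problem_graph n m R B) C))"
  have "\<forall>i\<in>{..<n}. \<exists>L. set L \<subseteq> max_clique_family n m R B \<and> Nt i \<subseteq> \<Union>(set L) \<and>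
             \<Union>(set L) \<subseteq> problem_vertices n m R \<and> (\<Sum>C\<leftarrow>L. ?c C) = ?c (Nt i)"
    using per_i assms(2) by (auto simp: nbhd_partition_def)
  then obtain L where L: "\<And>i. i < n \<Longrightarrow> set (L i) \<subseteq> max_clique_family n m R B \<and> Nt i \<subseteq> \<Union>(set (L i)) \<and>
             \<Union>(set (L i)) \<subseteq> problem_vertices n m R \<and> (\<Sum>C\<leftarrow>L i. ?c C) = ?c (Nt i)"
    by (metis lessThan_iff)
  define Cs where "Cs = concat (map L [0..<n])"
  have s1: "set Cs \<subseteq> max_clique_family n m R B" unfolding Cs_def using L by fastforce
  have s2: "\<Union> (set Cs) = problem_vertices n m R"
  proof
    show "\<Union> (set Cs) \<subseteq> problem_vertices n m R" using L by (fastforce simp: Cs_def)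
    show "problem_vertices n m R \<subseteq> \<Union> (set Cs)"
    proof
      fix x assume "x \<in> problem_vertices n m R"
      then have "x \<in> (\<Union>i<n. Nt i)" using assms(2) by (simp add: nbhd_partition_def)
      then obtain i where "i < n" "x \<in> Nt i" by blast
      then obtain C where "C \<in> set (L i)" "x \<in> C" using L by blast
      then show "x \<in> \<Union> (set Cs)" using \<open>i < n\<close> by (auto simp: Cs_def)
    qed
  qed
  have "(\<Sum>C\<leftarrow>Cs. ?c C) = (\<Sum>i\<leftarrow>[0..<n]. (\<Sum>C\<leftarrow>L i. ?c C))"
    unfolding Cs_def map_concat my_sum_list_concat map_map comp_def ..
  also have "\<dots> = (\<Sum>i\<leftarrow>[0..<n]. ?c (Nt i))"
    using L by (intro arg_cong[where f=sum_list] map_cong) auto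
  also have "\<dots> = (\<Sum>i<n. ?c (Nt i))"
    using sum_set_upt_conv_sum_list_nat[of "\<lambda>i. ?c (Nt i)" 0 n] by (simp add: atLeast0LessThan)
  finally show ?thesis using s1 s2 by blast
qed

end
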